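(* Let $a\in\mathbb{R}$ with $a>5$ and $n\in\mathbb{N}$. Let $E_n(a,1)$ be the $(n+1)\times n$ matrix whose $(i,j)$ entry is $-a$ if $i=j$, $1$ if $j=i+1$, $a$ if $i=j+1$, $-1$ if $i=j+2$, and $0$ otherwise. Then for every $1\le k\le n+1$, the $n\times n$ matrix $E_n^k(a,1)$ obtained by deleting the $k$-th row of $E_n(a,1)$ is invertible; that is, all order-$n$ minors of $E_n(a,1)$ are nonzero. *)

theory Defs
  imports "Jordan_Normal_Form.Matrix"
begin

definition E_entry :: "real \<Rightarrow> nat \<Rightarrow> nat \<Rightarrow> real" where
  "E_entry a i j =
     (if i = j then - a
      else if j = i + 1 then 1
      else if i = j + 1 then a
      else if i = j + 2 then - 1
      else 0)"

(* The (n+1) x n matrix E_n(a,1); Jordan_Normal_Form matrices are 0-indexed,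
   so the paper's entry (i,j) sits at position (i-1,j-1). *)
definition E_mat :: "nat \<Rightarrow> real \<Rightarrow> real mat" where
  "E_mat n a = mat (n + 1) n (\<lambda>(i, j). E_entry a (i + 1) (j + 1))"

(* Delete the k-th row (1-based) of a matrix. *)
definition delete_row :: "nat \<Rightarrow> 'a mat \<Rightarrow> 'a mat" where
  "delete_row k A = mat (dim_row A - 1) (dim_col A)
     (\<lambda>(i, j). if i + 1 < k then A $$ (i, j) else A $$ (i + 1, j))"

end

theory Submission
  imports Defs "Jordan_Normal_Form.Determinant"
begin


lemma step_ineq:
  fixes a u v w z :: real
  assumes "a > 5" "4*\<bar>u\<bar> \<le> \<bar>w\<bar>" "2*\<bar>v\<bar> \<le> \<bar>w\<bar>" "z = u - a*v + a*w"
  shows "2*\<bar>w\<bar> \<le> \<bar>z\<bar>"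
proof -
  have "a*(2*\<bar>v\<bar>) \<le> a*\<bar>w\<bar>" using assms by (intro mult_left_mono) auto
  then have "2*(a*\<bar>v\<bar>) \<le> a*\<bar>w\<bar>" by simp
  moreover have "\<bar>a*w\<bar> \<le> \<bar>z\<bar> + \<bar>a*v\<bar> + \<bar>u\<bar>" using assms(4) by linarith
  ultimately have h: "a*\<bar>w\<bar> \<le> \<bar>z\<bar> + a*\<bar>v\<bar> + \<bar>u\<bar>" and h2: "2*(a*\<bar>v\<bar>) \<le> a*\<bar>w\<bar>"
    using assms(1) by (auto simp: abs_mult)
  have h3: "5 * \<bar>w\<bar> \<le> a * \<bar>w\<bar>" using assms(1) by (intro mult_right_mono) auto
  have h4: "4*\<bar>u\<bar> \<le> \<bar>w\<bar>" by (rule assms(2))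
  from h h2 h3 h4 show ?thesis by linarith
qed

lemma key:
  fixes y :: "nat \<Rightarrow> real"
  assumes a: "a > 5" and K: "K \<le> n" and y0: "y 0 = 0" "y 1 = 0"
    and yn: "\<And>m. m \<ge> n+2 \<Longrightarrow> y m = 0"
    and eq: "\<And>r. r \<le> n \<Longrightarrow> r \<noteq> K \<Longrightarrow> - y r + a*y(r+1) - a*y(r+2) + y(r+3) = 0"
  shows "y m = 0"
proof -
  have F: "2*\<bar>y m\<bar> \<le> \<bar>y (m+1)\<bar>" if "m \<le> K+1" for m
    using that
  proof (induction m rule: less_induct)
    case (less m)
    show ?case
    proof (cases "m \<le> 1")
      case True then show ?thesis using y0 by (cases m) auto
    next
      case False
      define p where "p = m - 2"
      have p: "m = p+2" using False by (simp add: p_def)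
      have h1: "2*\<bar>y p\<bar> \<le> \<bar>y (p+1)\<bar>" using less p by auto
      have h2: "2*\<bar>y (p+1)\<bar> \<le> \<bar>y (p+2)\<bar>" using less.IH[of "p+1"] less.prems p by auto
      have e: "- y p + a*y(p+1) - a*y(p+2) + y(p+3) = 0" using eq[of p] less.prems p K by auto
      have "2*\<bar>y (p+2)\<bar> \<le> \<bar>y (p+3)\<bar>"
        by (rule step_ineq[OF a, of "y p" "y (p+2)" "y (p+1)"]) (use h1 h2 e in linarith)+
      then show ?thesis by (simp add: p numeral_3_eq_3)
    qed
  qed
  have B: "2*\<bar>y (m+1)\<bar> \<le> \<bar>y m\<bar>" if "m \<ge> K+1" for m
    using that
  proof (induction "n+2-m" arbitrary: m rule: less_induct)
    case less
    show ?case
    proof (cases "m \<ge> n+1")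
      case True then show ?thesis using yn[of "m+1"] by auto
    next
      case False
      have h1: "2*\<bar>y (m+2)\<bar> \<le> \<bar>y (m+1)\<bar>" using less.hyps[of "m+1"] less.prems False by auto
      have h2: "2*\<bar>y (m+3)\<bar> \<le> \<bar>y (m+2)\<bar>" using less.hyps[of "m+2"] less.prems False by (auto simp: numeral_3_eq_3)
      have e: "- y m + a*y(m+1) - a*y(m+2) + y(m+3) = 0" using eq[of m] less.prems False by auto
      show ?thesis
        by (rule step_ineq[OF a, of "y (m+3)" "y (m+1)" "y (m+2)"]) (use h1 h2 e in linarith)+
    qed
  qed
  have z1: "y (K+1) = 0" "y (K+2) = 0" using F[of "K+1"] B[of "K+1"] by auto
  have lo: "y (K+2-d) = 0" for d
  proof (induction d)
    case 0 then show ?case using z1 by simp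
  next
    case (Suc d)
    show ?case
    proof (cases "d < K+2")
      case True
      have "K+2-Suc d + 1 = K+2-d" using True by auto
      then show ?thesis using F[of "K+2-Suc d"] Suc by auto
    next
      case False then show ?thesis using Suc by auto
    qed
  qed
  have hi: "y (K+1+d) = 0" for d
  proof (induction d)
    case 0 then show ?case using z1 by simp
  next
    case (Suc d)
    then show ?case using B[of "K+1+d"] by auto
  qed
  show ?thesis
  proof (cases "m \<le> K+2")
    case True then show ?thesis using lo[of "K+2-m"] by auto
  next
    case False then show ?thesis using hi[of "m-K-1"] by auto
  qed
qed


lemma delta_sum:
  fixes y :: "nat \<Rightarrow> real"
  assumes y0: "y 0 = 0" "y 1 = 0" and yn: "\<And>m. m \<ge> n+2 \<Longrightarrow> y m = 0"
  shows "(\<Sum>j<n. if j+2 = c then b * y (j+2) else 0) = b * y c"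
proof (cases "c \<ge> 2")
  case True
  have "(\<Sum>j<n. if j+2 = c then b * y (j+2) else 0) = (\<Sum>j<n. if j = c-2 then b * y c else 0)"
    using True by (intro sum.cong) auto
  also have "\<dots> = (if c - 2 < n then b * y c else 0)" by (simp add: sum.delta)
  also have "\<dots> = b * y c" using yn[of c] True by auto
  finally show ?thesis .
next
  case False
  then have "c = 0 \<or> c = 1" by auto
  then show ?thesis using y0 by auto
qed

lemma row_sum:
  fixes y :: "nat \<Rightarrow> real"
  assumes y0: "y 0 = 0" "y 1 = 0" and yn: "\<And>m. m \<ge> n+2 \<Longrightarrow> y m = 0"
  shows "(\<Sum>j<n. E_entry a (r+1) (j+1) * y (j+2)) = - y r + a*y(r+1) - a*y(r+2) + y(r+3)"
proof -
  have "(\<Sum>j<n. E_entry a (r+1) (j+1) * y (j+2)) =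
    (\<Sum>j<n. (if j+2 = r then (-1) * y (j+2) else 0) + (if j+2 = r+1 then a * y (j+2) else 0)
       + (if j+2 = r+2 then (-a) * y (j+2) else 0) + (if j+2 = r+3 then 1 * y (j+2) else 0))"
    by (intro sum.cong) (auto simp: E_entry_def)
  also have "\<dots> = - y r + a*y(r+1) - a*y(r+2) + y(r+3)"
    by (simp only: sum.distrib delta_sum[OF assms])
  finally show ?thesis .
qed

theorem proposition4p2:
  fixes a :: real and n k :: nat
  assumes "a > 5" and "1 \<le> k" and "k \<le> n + 1"
  shows "invertible_mat (delete_row k (E_mat n a))"
proof -
  define M where "M = delete_row k (E_mat n a)"
  define ri where "ri i = (if i+1 < k then i else i+1)" for i :: nat
  have M: "M \<in> carrier_mat n n" by (simp add: M_def delete_row_def E_mat_def)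
  have Mij: "M $$ (i,j) = E_entry a (ri i + 1) (j+1)" if "i < n" "j < n" for i j
    using that by (simp add: M_def delete_row_def E_mat_def ri_def)
  have "det M \<noteq> 0"
  proof
    assume "det M = 0"
    then obtain v where v: "v \<in> carrier_vec n" "v \<noteq> 0\<^sub>v n" "M *\<^sub>v v = 0\<^sub>v n"
      using det_0_iff_vec_prod_zero_field[OF M] by auto
    define y where "y m = (if 2 \<le> m \<and> m \<le> n+1 then v $ (m-2) else 0)" for m
    have y0: "y 0 = 0" "y 1 = 0" by (auto simp: y_def)
    have yn: "\<And>m. m \<ge> n+2 \<Longrightarrow> y m = 0" by (auto simp: y_def)
    have vy: "v $ j = y (j+2)" if "j < n" for j using that by (auto simp: y_def)
    have eq: "- y r + a*y(r+1) - a*y(r+2) + y(r+3) = 0" if "r \<le> n" "r \<noteq> k-1" for r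
    proof -
      obtain i where i: "i < n" "ri i = r"
      proof (cases "r < k - 1")
        case True then show ?thesis using that(1) assms by (intro that[of r]) (auto simp: ri_def)
      next
        case False then show ?thesis using \<open>r \<le> n\<close> \<open>r \<noteq> k-1\<close> assms by (intro that[of "r-1"]) (auto simp: ri_def)
      qed
      have "0 = (M *\<^sub>v v) $ i" using v(3) i by simp
      also have "\<dots> = (\<Sum>j<n. M $$ (i,j) * v $ j)"
        using M v(1) i by (simp add: scalar_prod_def lessThan_atLeast0)
      also have "\<dots> = (\<Sum>j<n. E_entry a (r+1) (j+1) * y (j+2))"
        using i by (intro sum.cong) (auto simp: Mij vy)
      also have "\<dots> = - y r + a*y(r+1) - a*y(r+2) + y(r+3)"
        by (rule row_sum[OF y0 yn])
      finally show ?thesis by simp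
    qed
    have "\<And>m. y m = 0"
      by (rule key[OF assms(1) _ y0 yn eq]) (use assms in auto)
    then have "v = 0\<^sub>v n" using v(1) vy by (intro eq_vecI) auto
    with v(2) show False by simp
  qed
  then have "M \<in> Units (ring_mat TYPE(real) n ())" by (rule det_non_zero_imp_unit[OF M])
  then obtain B where B: "B \<in> carrier_mat n n" "B * M = 1\<^sub>m n" "M * B = 1\<^sub>m n"
    by (auto simp: Units_def ring_mat_def)
  show ?thesis unfolding M_def[symmetric] invertible_mat_def inverts_mat_def
    using M B by (intro conjI exI[of _ B]) auto
qed

end
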